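(* Let $G$ be a finite abstract simplicial complex with connection matrix $L$. Then $\det(L)=\phi(G)$, where $\phi(G)=\prod_{x\in G}\omega(x)\in\{-1,1\}$.
   Context: A finite abstract simplicial complex $G$ is a finite set of non-empty finite sets closed under taking non-empty subsets; its elements are called simplices. For $x\in G$ let $\dim(x)=|x|-1$ and $\omega(x)=(-1)^{\dim(x)}$. The connection matrix $L$ of $G$ is the $|G|\times|G|$ matrix indexed by the simplices of $G$ with $L(x,y)=1$ if $x\cap y\neq\emptyset$ and $L(x,y)=0$ otherwise. The number $\phi(G)=\prod_{x\in G}\omega(x)$ is called the Fermi characteristic. *)

theory Defs
  imports "Jordan_Normal_Form.Determinant"
begin

definition simplicial_complex :: "'a set set \<Rightarrow> bool" where
  "simplicial_complex G \<longleftrightarrow> finite G \<and>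
     (\<forall>x\<in>G. finite x \<and> x \<noteq> {}) \<and>
     (\<forall>x\<in>G. \<forall>y. y \<subseteq> x \<and> y \<noteq> {} \<longrightarrow> y \<in> G)"

definition sdim :: "'a set \<Rightarrow> int" where
  "sdim x = int (card x) - 1"

definition omega :: "'a set \<Rightarrow> int" where
  "omega x = (-1) ^ nat (sdim x)"

definition fermi_char :: "'a set set \<Rightarrow> int" where
  "fermi_char G = (\<Prod>x\<in>G. omega x)"

definition connection_matrix :: "'a set list \<Rightarrow> int mat" where
  "connection_matrix xs =
     mat (length xs) (length xs) (\<lambda>(i, j). if xs ! i \<inter> xs ! j \<noteq> {} then 1 else 0)"

end

theory Submission
  imports Defs
begin

lemma det_incl:
  fixes A :: "int mat" and xs :: "'a set list"
  assumes A: "A \<in> carrier_mat n n" and len: "length xs = n" and dist: "distinct xs"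
    and fin: "\<forall>x\<in>set xs. finite x"
    and nz: "\<And>i j. i < n \<Longrightarrow> j < n \<Longrightarrow> A $$ (i, j) \<noteq> 0 \<Longrightarrow> xs ! j \<subseteq> xs ! i"
  shows "det A = (\<Prod>i = 0..<n. A $$ (i, i))"
proof -
  have zero: "(\<Prod>i = 0..<n. A $$ (i, p i)) = 0" if p: "p permutes {0..<n}" and pid: "p \<noteq> id" for p
  proof (rule ccontr)
    assume "(\<Prod>i = 0..<n. A $$ (i, p i)) \<noteq> 0"
    hence all: "\<forall>i\<in>{0..<n}. A $$ (i, p i) \<noteq> 0" by auto
    have pin: "\<And>i. i < n \<Longrightarrow> p i < n" using p by (meson atLeastLessThan_iff le0 permutes_in_image)
    have sub: "\<And>i. i < n \<Longrightarrow> xs ! (p i) \<subseteq> xs ! i" using all nz pin by auto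
    have le: "\<And>i. i \<in> {0..<n} \<Longrightarrow> card (xs ! (p i)) \<le> card (xs ! i)"
      using sub fin len by (simp add: card_mono)
    have "(\<Sum>i\<in>{0..<n}. card (xs ! (p i))) = (\<Sum>i\<in>{0..<n}. card (xs ! i))"
      using sum.reindex_bij_betw[OF permutes_imp_bij[OF p], where g="\<lambda>i. card (xs ! i)"] by simp
    hence eqc: "\<And>i. i \<in> {0..<n} \<Longrightarrow> card (xs ! (p i)) = card (xs ! i)"
      using le sum_mono_inv[where I="{0..<n}" and f="\<lambda>i. card (xs ! (p i))" and g="\<lambda>i. card (xs ! i)"]
      by (metis finite_atLeastLessThan)
    have "\<And>i. i < n \<Longrightarrow> p i = i"
    proof -
      fix i assume i: "i < n"
      have "xs ! (p i) = xs ! i"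
        using card_subset_eq[of "xs ! i" "xs ! (p i)"] sub[OF i] eqc[of i] fin len i by auto
      thus "p i = i" using dist len i pin[OF i] nth_eq_iff_index_eq by metis
    qed
    moreover have "\<And>i. i \<ge> n \<Longrightarrow> p i = i" using p unfolding permutes_def by auto
    ultimately have "p = id" by (metis eq_id_iff not_less)
    thus False using pid by simp
  qed
  have "det A = (\<Sum>p \<in> {p. p permutes {0..<n}}. signof p * (\<Prod>i = 0..<n. A $$ (i, p i)))"
    using det_def'[OF A] .
  also have "\<dots> = (\<Sum>p \<in> {id}. signof p * (\<Prod>i = 0..<n. A $$ (i, p i)))"
    by (rule sum.mono_neutral_right) (auto simp: permutes_id zero finite_permutations)
  also have "\<dots> = (\<Prod>i = 0..<n. A $$ (i, i))" by simp
  finally show ?thesis .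
qed

lemma alt_sum:
  assumes "finite S"
  shows "(\<Sum>z\<in>Pow S - {{}}. omega z) = (if S = {} then 0 else 1)"
proof -
  have om: "omega z = - ((-1) ^ card z)" if "z \<in> Pow S - {{}}" for z
  proof -
    have "card z \<ge> 1" using that assms by (auto simp: Suc_le_eq card_gt_0_iff intro: finite_subset)
    then obtain m where m: "card z = Suc m" by (metis not0_implies_Suc not_one_le_zero)
    thus ?thesis by (simp add: omega_def sdim_def)
  qed
  have "(\<Sum>z\<in>Pow S - {{}}. omega z) = (\<Sum>z\<in>Pow S - {{}}. - ((-1::int) ^ card z))"
    using om by (rule sum.cong[OF refl])
  also have "\<dots> = - ((\<Sum>z\<in>Pow S. (-1::int) ^ card z) - 1)"
    using assms by (simp add: sum_negf sum_diff1 card_gt_0_iff)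
  also have "(\<Sum>z\<in>Pow S. (-1::int) ^ card z) = (\<Prod>x\<in>S. (1::int) - 1)"
    using prod_diff_conv_sum[OF assms, of "\<lambda>_. 1::int" "\<lambda>_. 1"] by simp
  also have "\<dots> = (if S = {} then 1 else 0)" using assms by (simp add: card_gt_0_iff)
  finally show ?thesis by simp
qed

theorem theorem1:
  fixes G :: "'a set set" and xs :: "'a set list"
  assumes "simplicial_complex G"
    and "distinct xs" and "set xs = G"
  shows "det (connection_matrix xs) = fermi_char G"
proof -
  define n where "n = length xs"
  define W :: "int mat" where "W = mat n n (\<lambda>(i, k). if xs ! k \<subseteq> xs ! i then omega (xs ! k) else 0)"
  define Z :: "int mat" where "Z = mat n n (\<lambda>(i, k). if xs ! k \<subseteq> xs ! i then 1 else 0)"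
  have sc: "finite G" "\<And>x. x \<in> G \<Longrightarrow> finite x \<and> x \<noteq> {}"
    "\<And>x y. x \<in> G \<Longrightarrow> y \<subseteq> x \<Longrightarrow> y \<noteq> {} \<Longrightarrow> y \<in> G"
    using assms(1) unfolding simplicial_complex_def by blast+
  have fin: "\<forall>x\<in>set xs. finite x" using sc assms(3) by auto
  have Wc: "W \<in> carrier_mat n n" and Zc: "Z \<in> carrier_mat n n" by (auto simp: W_def Z_def)
  have detW: "det W = fermi_char G"
  proof -
    have "det W = (\<Prod>i = 0..<n. W $$ (i, i))"
      by (rule det_incl[OF Wc _ assms(2) fin]) (auto simp: n_def W_def split: if_splits)
    also have "\<dots> = (\<Prod>i = 0..<n. omega (xs ! i))" by (simp add: W_def)
    also have "\<dots> = (\<Prod>x\<in>set xs. omega x)"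
      using prod.reindex_bij_betw[OF bij_betw_nth[OF assms(2), of "{0..<n}" "set xs"], where g=omega]
      by (simp add: n_def atLeast0LessThan)
    finally show ?thesis using assms(3) by (simp add: fermi_char_def)
  qed
  have detZ: "det Z = 1"
  proof -
    have "det Z = (\<Prod>i = 0..<n. Z $$ (i, i))"
      by (rule det_incl[OF Zc _ assms(2) fin]) (auto simp: n_def Z_def split: if_splits)
    thus ?thesis by (simp add: Z_def)
  qed
  have eq: "connection_matrix xs = W * transpose_mat Z"
  proof (rule eq_matI)
    fix i j assume i: "i < dim_row (W * transpose_mat Z)" and j: "j < dim_col (W * transpose_mat Z)"
    hence i: "i < n" and j: "j < n" by (auto simp: W_def Z_def)
    define S where "S = xs ! i \<inter> xs ! j"
    have xiG: "xs ! i \<in> G" using i assms(3) n_def by auto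
    have finS: "finite S" using sc(2)[OF xiG] S_def by auto
    have "(W * transpose_mat Z) $$ (i, j) = (\<Sum>k = 0..<n. W $$ (i, k) * Z $$ (j, k))"
      using i j by (simp add: W_def Z_def scalar_prod_def)
    also have "\<dots> = (\<Sum>k = 0..<n. (\<lambda>z. if z \<subseteq> S then omega z else 0) (xs ! k))"
      using i j by (intro sum.cong) (auto simp: W_def Z_def S_def)
    also have "\<dots> = (\<Sum>z\<in>set xs. (if z \<subseteq> S then omega z else 0))"
      using sum.reindex_bij_betw[OF bij_betw_nth[OF assms(2), of "{0..<n}" "set xs"],
          where g="\<lambda>z. if z \<subseteq> S then omega z else 0"]
      by (simp add: n_def atLeast0LessThan)
    also have "\<dots> = (\<Sum>z\<in>G \<inter> Pow S. omega z)"
      using assms(3) sc(1) by (simp add: sum.inter_restrict Pow_def)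
    also have "G \<inter> Pow S = Pow S - {{}}"
      using sc(2,3)[OF xiG] sc(2) S_def by auto
    also have "(\<Sum>z\<in>Pow S - {{}}. omega z) = (if S = {} then 0 else 1)" by (rule alt_sum[OF finS])
    finally show "connection_matrix xs $$ (i, j) = (W * transpose_mat Z) $$ (i, j)"
      using i j by (simp add: connection_matrix_def n_def S_def)
  qed (auto simp: connection_matrix_def n_def W_def Z_def)
  show ?thesis
    unfolding eq det_mult[OF Wc transpose_carrier_mat[THEN iffD2, OF Zc]] det_transpose[OF Zc] detW detZ by simp
qed

end
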